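(* Let $n,p,q\in\mathbb{N}_{>0}$ with $p>q$, let $\mathcal W:\mathbb{R}^q\to\mathbb{R}^p$ be a mapping, let $\eta\in\mathbb{R}^q$ be a constant vector, and let $(y(k))_{k\in\mathbb{N}_{\ge0}}\subset\mathbb{R}^n$, $(\Omega(k))_{k\in\mathbb{N}_{\ge0}}\subset\mathbb{R}^{n\times p}$ be sequences satisfying $y(k)=\Omega(k)\mathcal W(\eta)$ for all $k\ge0$. Let $T\in\mathbb{R}^{p\times p}$ be a permutation matrix, $C:=\begin{bmatrix} I_q & | & 0_{q\times(p-q)}\end{bmatrix}T$ and $\mathcal G(\eta):=C\mathcal W(\eta)$. Fix $0<\alpha<1$ and define, for $k\ge1$, $$Y(k)=-\alpha Y(k-1)+\Omega^\top(k-1)y(k-1),\qquad \Phi(k)=-\alpha\Phi(k-1)+\Omega^\top(k-1)\Omega(k-1),$$ with $Y(0)=0\in\mathbb{R}^p$, $\Phi(0)=0\in\mathbb{R}^{p\times p}$, and set $\mathcal Y(k):=C\,\mathrm{adj}\{\Phi(k)\}Y(k)$, $\Delta(k):=\det\{\Phi(k)\}$. Then $$\mathcal Y_i(k)=\Delta(k)\mathcal G_i(\eta),\quad i=1,\dots,q,$$ i.e. $\mathcal Y(k)=\Delta(k)\mathcal G(\eta)$, for all $k\ge0$.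
   Context: $\mathrm{adj}\{A\}$ denotes the adjugate matrix of a square matrix $A$, satisfying $\mathrm{adj}\{A\}A=\det\{A\}I$. *)

theory Defs
  imports "Jordan_Normal_Form.Determinant"
begin

definition perm_matrix :: "nat \<Rightarrow> real mat \<Rightarrow> bool" where
  "perm_matrix p T \<longleftrightarrow>
     (\<exists>\<sigma>. \<sigma> permutes {..<p} \<and> T = mat p p (\<lambda>(i,j). if \<sigma> i = j then 1 else 0))"

definition sel_block :: "nat \<Rightarrow> nat \<Rightarrow> real mat" where
  "sel_block q p = mat q p (\<lambda>(i,j). if i = j then 1 else 0)"

primrec Yf :: "nat \<Rightarrow> real \<Rightarrow> (nat \<Rightarrow> real mat) \<Rightarrow> (nat \<Rightarrow> real vec) \<Rightarrow> nat \<Rightarrow> real vec" where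
  "Yf p \<alpha> \<Omega> y 0 = 0\<^sub>v p"
| "Yf p \<alpha> \<Omega> y (Suc k) = (- \<alpha>) \<cdot>\<^sub>v Yf p \<alpha> \<Omega> y k + transpose_mat (\<Omega> k) *\<^sub>v y k"

primrec Phif :: "nat \<Rightarrow> real \<Rightarrow> (nat \<Rightarrow> real mat) \<Rightarrow> nat \<Rightarrow> real mat" where
  "Phif p \<alpha> \<Omega> 0 = 0\<^sub>m p p"
| "Phif p \<alpha> \<Omega> (Suc k) = (- \<alpha>) \<cdot>\<^sub>m Phif p \<alpha> \<Omega> k + transpose_mat (\<Omega> k) * \<Omega> k"

end

theory Submission
  imports Defs
begin

theorem proposition2:
  fixes n p q :: nat
    and W :: "real vec \<Rightarrow> real vec"
    and \<eta> :: "real vec"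
    and y :: "nat \<Rightarrow> real vec"
    and \<Omega> :: "nat \<Rightarrow> real mat"
    and T :: "real mat"
    and \<alpha> :: real
  assumes "n > 0" and "p > 0" and "q > 0" and "p > q"
    and W_dim: "\<forall>x \<in> carrier_vec q. W x \<in> carrier_vec p"
    and eta: "\<eta> \<in> carrier_vec q"
    and y_dim: "\<forall>k. y k \<in> carrier_vec n"
    and Omega_dim: "\<forall>k. \<Omega> k \<in> carrier_mat n p"
    and regr: "\<forall>k. y k = \<Omega> k *\<^sub>v W \<eta>"
    and T: "perm_matrix p T"
    and "0 < \<alpha>" and "\<alpha> < 1"
  shows "\<forall>k. sel_block q p * T *\<^sub>v (adj_mat (Phif p \<alpha> \<Omega> k) *\<^sub>v Yf p \<alpha> \<Omega> y k)
             = det (Phif p \<alpha> \<Omega> k) \<cdot>\<^sub>v (sel_block q p * T *\<^sub>v W \<eta>)"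
proof
  fix k
  define w where "w = W \<eta>"
  have w: "w \<in> carrier_vec p" using W_dim eta unfolding w_def by auto
  have Ph: "\<And>k. Phif p \<alpha> \<Omega> k \<in> carrier_mat p p"
  proof -
    fix k show "Phif p \<alpha> \<Omega> k \<in> carrier_mat p p"
      proof (induction k)
        case (Suc k)
        have O: "\<Omega> k \<in> carrier_mat n p" using Omega_dim by auto
        have "transpose_mat (\<Omega> k) * \<Omega> k \<in> carrier_mat p p" using O by auto
        then show ?case using Suc by simp
      qed simp
  qed
  have Yk: "Yf p \<alpha> \<Omega> y k = Phif p \<alpha> \<Omega> k *\<^sub>v w"
  proof (induction k)
    case 0
    then show ?case using w by auto
  next
    case (Suc k)
    have O: "\<Omega> k \<in> carrier_mat n p" using Omega_dim by auto
    have "Phif p \<alpha> \<Omega> (Suc k) *\<^sub>v w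
        = ((- \<alpha>) \<cdot>\<^sub>m Phif p \<alpha> \<Omega> k) *\<^sub>v w + (transpose_mat (\<Omega> k) * \<Omega> k) *\<^sub>v w"
      using Ph[of k] O w by (simp add: add_mult_distrib_mat_vec[of _ p p])
    also have "\<dots> = (- \<alpha>) \<cdot>\<^sub>v (Phif p \<alpha> \<Omega> k *\<^sub>v w) + transpose_mat (\<Omega> k) *\<^sub>v y k"
      using Ph[of k] O w regr unfolding w_def by auto
    finally show ?case using Suc by simp
  qed
  let ?P = "Phif p \<alpha> \<Omega> k"
  have "adj_mat ?P *\<^sub>v Yf p \<alpha> \<Omega> y k = (adj_mat ?P * ?P) *\<^sub>v w"
    using Yk adj_mat[OF Ph[of k]] Ph[of k] w by (metis assoc_mult_mat_vec)
  also have "\<dots> = det ?P \<cdot>\<^sub>v w" using adj_mat[OF Ph[of k]] w by auto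
  finally have A: "adj_mat ?P *\<^sub>v Yf p \<alpha> \<Omega> y k = det ?P \<cdot>\<^sub>v w" .
  have CT: "sel_block q p * T \<in> carrier_mat q p"
    using T unfolding perm_matrix_def sel_block_def by auto
  show "sel_block q p * T *\<^sub>v (adj_mat ?P *\<^sub>v Yf p \<alpha> \<Omega> y k)
             = det ?P \<cdot>\<^sub>v (sel_block q p * T *\<^sub>v W \<eta>)"
    unfolding A using mult_mat_vec[OF CT w] unfolding w_def by simp
qed

end
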